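(* Let $\epsilon\in(0,1)$ and $q\in\mathbb N$. Let $\xi$ be a detailing of $\mu$ with respect to a finite set $A$, let $\eta$ be a distribution over $A\times B$ ($B$ finite) with $\eta|_1=\xi|_2$, let $H:[n]\to([0,1]^{A\times B})^2$ satisfy $(H(i))_1(a,b)=\Pr_{x\sim\xi|_1^{2:a}}[x_i=1]$ for all $i$ and all $(a,b)$ with $\eta(a,b)>0$, and let $\Xi$ be the output distribution of Change-types$(\xi,\eta,H)$. If $\xi$ is $(\epsilon,q)$-good, then the detailing $\Xi|_{2,3}$ of $\tau=\Xi|_2$ (with respect to $A\times B$) is also $(\epsilon,q)$-good.
   Context: Change-types$(\xi,\eta,H)$ outputs a sample $(x,y,(a,b))$ of a distribution $\Xi$ over $\{0,1\}^n\times\{0,1\}^n\times(A\times B)$: draw $(x,a)\sim\xi$ and then $b\sim\eta|_2^{1:a}$; then independently for each $i\in[n]$, with $h_1=(H(i))_1(a,b)$, $h_2=(H(i))_2(a,b)$: if $x_i=1$, set $y_i=0$ with probability $\max\{0,(h_1-h_2)/h_1\}$ and $y_i=1$ otherwise; if $x_i=0$, set $y_i=1$ with probability $\max\{0,(h_2-h_1)/(1-h_1)\}$ and $y_i=0$ otherwise (zero-denominator cases have probability zero). A detailing of $\mu$ w.r.t. a finite set $C$ is a distribution $\zeta$ on $\{0,1\}^n\times C$ with first marginal $\mu$; $\zeta|_1^{2:c}$ is the conditional first coordinate given second coordinate $c$. For a distribution $\nu$ over $\{0,1\}^n$, a $q$-tuple $(j_1,\dots,j_q)$ of distinct indices is $\epsilon$-independent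 w.r.t. $\nu$ if $d_{TV}(\nu|_{\{j_1,\dots,j_q\}},\prod_{\ell}\nu|_{j_\ell})\le\epsilon$; $\nu$ is $(\epsilon,q)$-good if at least a $1-\epsilon$ fraction of $q$-tuples of distinct indices are $\epsilon$-independent; the detailing $\zeta$ is $(\epsilon,q)$-good if there is $J\subseteq C$ with $\zeta|_2(J)\ge1-\epsilon$ and $\zeta|_1^{2:c}$ $(\epsilon,q)$-good for all $c\in J$. *)

theory Defs
  imports "HOL-Probability.Probability"
begin

text \<open>Points of {0,1}^n are bool lists of length n (index i in [n] is position i-1).\<close>

definition tv_dist :: "'x pmf \<Rightarrow> 'x pmf \<Rightarrow> real" where
  "tv_dist p p' = (SUP A. \<bar>measure_pmf.prob p A - measure_pmf.prob p' A\<bar>)"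

fun prod_list_pmf :: "'x pmf list \<Rightarrow> 'x list pmf" where
  "prod_list_pmf [] = return_pmf []"
| "prod_list_pmf (p # ps) = bind_pmf p (\<lambda>b. map_pmf (\<lambda>bs. b # bs) (prod_list_pmf ps))"

definition coord_marg :: "bool list pmf \<Rightarrow> nat \<Rightarrow> bool pmf" where
  "coord_marg \<nu> j = map_pmf (\<lambda>x. x ! j) \<nu>"

definition tuple_marg :: "bool list pmf \<Rightarrow> nat list \<Rightarrow> bool list pmf" where
  "tuple_marg \<nu> js = map_pmf (\<lambda>x. map (\<lambda>j. x ! j) js) \<nu>"

definition eps_independent :: "real \<Rightarrow> bool list pmf \<Rightarrow> nat list \<Rightarrow> bool" where
  "eps_independent \<epsilon> \<nu> js \<longleftrightarrow>
     tv_dist (tuple_marg \<nu> js) (prod_list_pmf (map (coord_marg \<nu>) js)) \<le> \<epsilon>"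

definition distinct_tuples :: "nat \<Rightarrow> nat \<Rightarrow> nat list set" where
  "distinct_tuples n q = {js. length js = q \<and> distinct js \<and> set js \<subseteq> {..<n}}"

definition good_dist :: "nat \<Rightarrow> real \<Rightarrow> nat \<Rightarrow> bool list pmf \<Rightarrow> bool" where
  "good_dist n \<epsilon> q \<nu> \<longleftrightarrow>
     real (card {js \<in> distinct_tuples n q. eps_independent \<epsilon> \<nu> js})
       \<ge> (1 - \<epsilon>) * real (card (distinct_tuples n q))"

definition cond_marg1 :: "('x \<times> 'c) pmf \<Rightarrow> 'c \<Rightarrow> 'x pmf" where
  "cond_marg1 \<zeta> c = map_pmf fst (cond_pmf \<zeta> {p. snd p = c})"

definition cond_marg2 :: "('c \<times> 'x) pmf \<Rightarrow> 'c \<Rightarrow> 'x pmf" where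
  "cond_marg2 \<zeta> c = map_pmf snd (cond_pmf \<zeta> {p. fst p = c})"

definition is_detailing :: "nat \<Rightarrow> bool list pmf \<Rightarrow> (bool list \<times> 'c) pmf \<Rightarrow> bool" where
  "is_detailing n \<mu> \<zeta> \<longleftrightarrow> map_pmf fst \<zeta> = \<mu> \<and> set_pmf \<mu> \<subseteq> {x. length x = n}"

text \<open>J is taken inside the support of the second marginal (conditionals only
  make sense there; this does not change the notion).\<close>
definition good_detailing :: "nat \<Rightarrow> real \<Rightarrow> nat \<Rightarrow> (bool list \<times> 'c) pmf \<Rightarrow> bool" where
  "good_detailing n \<epsilon> q \<zeta> \<longleftrightarrow>
     (\<exists>J. J \<subseteq> set_pmf (map_pmf snd \<zeta>) \<and> measure_pmf.prob (map_pmf snd \<zeta>) J \<ge> 1 - \<epsilon> \<and>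
          (\<forall>c\<in>J. good_dist n \<epsilon> q (cond_marg1 \<zeta> c)))"

text \<open>Probability that y_i = 1 given x_i, h1, h2 (division by zero gives 0 in HOL).\<close>
definition one_prob :: "bool \<Rightarrow> real \<Rightarrow> real \<Rightarrow> real" where
  "one_prob xi h1 h2 =
     (if xi then 1 - max 0 ((h1 - h2) / h1) else max 0 ((h2 - h1) / (1 - h1)))"

definition change_types ::
  "nat \<Rightarrow> (bool list \<times> 'a) pmf \<Rightarrow> ('a \<times> 'b) pmf
     \<Rightarrow> (nat \<Rightarrow> ('a \<times> 'b \<Rightarrow> real) \<times> ('a \<times> 'b \<Rightarrow> real))
     \<Rightarrow> (bool list \<times> bool list \<times> ('a \<times> 'b)) pmf" where
  "change_types n \<xi> \<eta> H =
     bind_pmf \<xi> (\<lambda>(x, a).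
       bind_pmf (cond_marg2 \<eta> a) (\<lambda>b.
         map_pmf (\<lambda>y. (x, y, (a, b)))
           (prod_list_pmf (map (\<lambda>i. bernoulli_pmf
                (one_prob (x ! i) (fst (H i) (a, b)) (snd (H i) (a, b)))) [0..<n]))))"

end

theory Submission
  imports Defs
begin

lemma set_prod_list_pmf: "set_pmf (prod_list_pmf ps) \<subseteq> {z. length z = length ps}"
  by (induction ps) auto

lemma prod_list_coord:
  "j < length ps \<Longrightarrow> map_pmf (\<lambda>y. y ! j) (prod_list_pmf ps) = ps ! j"
proof (induction ps arbitrary: j)
  case Nil then show ?case by simp
next
  case (Cons p ps)
  show ?case
  proof (cases j)
    case 0 then show ?thesis
      by (simp add: map_bind_pmf pmf.map_comp o_def bind_return_pmf')
  next
    case (Suc j') then show ?thesis using Cons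
      by (simp add: map_bind_pmf pmf.map_comp o_def)
  qed
qed

lemma prod_list_ins:
  "k \<le> length L \<Longrightarrow> prod_list_pmf (take k L @ p # drop k L) =
     bind_pmf p (\<lambda>b. map_pmf (\<lambda>w. take k w @ b # drop k w) (prod_list_pmf L))"
proof (induction L arbitrary: k)
  case Nil then show ?case by simp
next
  case (Cons l L)
  show ?case
  proof (cases k)
    case 0 then show ?thesis by simp
  next
    case (Suc k')
    have e: "take k (l # L) @ p # drop k (l # L) = l # (take k' L @ p # drop k' L)" using Suc by simp
    have "prod_list_pmf (take k (l # L) @ p # drop k (l # L)) =
       bind_pmf l (\<lambda>c. map_pmf (Cons c) (bind_pmf p (\<lambda>b. map_pmf (\<lambda>w. take k' w @ b # drop k' w) (prod_list_pmf L))))"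
      unfolding e prod_list_pmf.simps using Cons.IH[of k'] Cons.prems Suc by simp
    also have "\<dots> = bind_pmf p (\<lambda>b. bind_pmf l (\<lambda>c. map_pmf (\<lambda>w. c # (take k' w @ b # drop k' w)) (prod_list_pmf L)))"
      unfolding map_bind_pmf pmf.map_comp o_def by (subst bind_commute_pmf) (rule refl)
    also have "\<dots> = bind_pmf p (\<lambda>b. map_pmf (\<lambda>w. take k w @ b # drop k w) (prod_list_pmf (l # L)))"
      unfolding Suc by (simp add: map_bind_pmf pmf.map_comp o_def)
    finally show ?thesis .
  qed
qed

lemma inj_pred: assumes "0 \<notin> (A::nat set)" shows "inj_on (\<lambda>j. j - Suc 0) A"
proof (rule inj_onI)
  fix x y assume a: "x \<in> A" "y \<in> A" "x - Suc 0 = y - Suc 0"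
  have "x \<noteq> 0" "y \<noteq> 0" using assms a(1,2) by (metis, metis)
  with a show "x = y" by arith
qed

lemma map_nth_Cons_nz: "0 \<notin> set xs \<Longrightarrow>
  map (\<lambda>j. (b # ys) ! j) xs = map (\<lambda>j. ys ! j) (map (\<lambda>j. j - 1) xs)"
  unfolding map_map o_def by (rule map_cong[OF refl]) (auto simp: nth_Cons')

lemma prod_list_sel:
  fixes ps :: "'a pmf list"
  shows "distinct js \<Longrightarrow> \<forall>j\<in>set js. j < length ps \<Longrightarrow>
   map_pmf (\<lambda>y. map (\<lambda>j. y ! j) js) (prod_list_pmf ps) = prod_list_pmf (map (\<lambda>j. ps ! j) js)"
proof (induction ps arbitrary: js)
  case Nil then show ?case by (cases js) auto
next
  case (Cons p ps)
  show ?case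
  proof (cases "0 \<in> set js")
    case False
    define js' where "js' = map (\<lambda>j. j - 1) js"
    have sel: "map (\<lambda>j. (b # ys) ! j) js = map (\<lambda>j. ys ! j) js'" for b :: 'a and ys :: "'a list"
      unfolding js'_def by (rule map_nth_Cons_nz[OF False])
    have dj: "distinct js'" unfolding js'_def distinct_map using Cons.prems False inj_pred[of "set js"]
      by simp
    have lj: "\<forall>j\<in>set js'. j < length ps" unfolding js'_def
    proof
      fix j assume "j \<in> set (map (\<lambda>j. j - 1) js)"
      then obtain i where "i \<in> set js" "j = i - 1" by auto
      with Cons.prems False show "j < length ps" by (cases i) auto
    qed
    have eqm: "map (\<lambda>j. (p # ps) ! j) js = map (\<lambda>j. ps ! j) js'"
      unfolding js'_def by (rule map_nth_Cons_nz[OF False])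
    have "map_pmf (\<lambda>y. map (\<lambda>j. y ! j) js) (prod_list_pmf (p # ps)) =
       bind_pmf p (\<lambda>b. map_pmf (\<lambda>ys. map (\<lambda>j. (b # ys) ! j) js) (prod_list_pmf ps))"
      by (simp add: map_bind_pmf pmf.map_comp o_def)
    also have "\<dots> = bind_pmf p (\<lambda>b. map_pmf (\<lambda>ys. map (\<lambda>j. ys ! j) js') (prod_list_pmf ps))"
      by (simp only: sel)
    also have "\<dots> = prod_list_pmf (map (\<lambda>j. ps ! j) js')"
      using Cons.IH[OF dj lj] by simp
    finally show ?thesis unfolding eqm .
  next
    case True
    then obtain js1 js2 where js: "js = js1 @ 0 # js2" by (meson split_list)
    have n1: "0 \<notin> set js1" and n2: "0 \<notin> set js2" using Cons.prems js by auto
    define js' where "js' = map (\<lambda>j. j - 1) (js1 @ js2)"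
    define k where "k = length js1"
    define L where "L = map (\<lambda>j. ps ! j) js'"
    have dj: "distinct js'" unfolding js'_def distinct_map using Cons.prems n1 n2 js inj_pred[of "set (js1 @ js2)"]
      by simp
    have lj: "\<forall>j\<in>set js'. j < length ps" unfolding js'_def
    proof
      fix j assume "j \<in> set (map (\<lambda>j. j - 1) (js1 @ js2))"
      then obtain i where "i \<in> set (js1 @ js2)" "j = i - 1" by auto
      with Cons.prems n1 n2 js show "j < length ps" by (cases i) auto
    qed
    have sel: "map (\<lambda>j. (b # ys) ! j) js = take k (map (\<lambda>j. ys ! j) js') @ b # drop k (map (\<lambda>j. ys ! j) js')"
      for b :: 'a and ys :: "'a list"
      unfolding js'_def k_def js using map_nth_Cons_nz[OF n1, of b ys] map_nth_Cons_nz[OF n2, of b ys] by simp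
    have eqL: "map (\<lambda>j. (p # ps) ! j) js = take k L @ p # drop k L"
      unfolding js'_def k_def js L_def using map_nth_Cons_nz[OF n1, of p ps] map_nth_Cons_nz[OF n2, of p ps] by simp
    have kL: "k \<le> length L" unfolding k_def L_def js'_def by simp
    have "map_pmf (\<lambda>y. map (\<lambda>j. y ! j) js) (prod_list_pmf (p # ps)) =
       bind_pmf p (\<lambda>b. map_pmf (\<lambda>ys. map (\<lambda>j. (b # ys) ! j) js) (prod_list_pmf ps))"
      by (simp add: map_bind_pmf pmf.map_comp o_def)
    also have "\<dots> = bind_pmf p (\<lambda>b. map_pmf (\<lambda>ys. take k (map (\<lambda>j. ys ! j) js') @ b # drop k (map (\<lambda>j. ys ! j) js')) (prod_list_pmf ps))"
      by (simp only: sel)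
    also have "\<dots> = bind_pmf p (\<lambda>b. map_pmf (\<lambda>w. take k w @ b # drop k w) (map_pmf (\<lambda>y. map (\<lambda>j. y ! j) js') (prod_list_pmf ps)))"
      by (simp only: pmf.map_comp o_def)
    also have "\<dots> = prod_list_pmf (take k L @ p # drop k L)"
      unfolding Cons.IH[OF dj lj] L_def[symmetric] using prod_list_ins[OF kL] by (rule sym)
    finally show ?thesis unfolding eqL .
  qed
qed

lemma prod_list_bind:
  "prod_list_pmf (map (\<lambda>j. bind_pmf (p j) (k j)) js) =
   bind_pmf (prod_list_pmf (map p js)) (\<lambda>z. prod_list_pmf (map2 k js z))"
proof (induction js)
  case Nil then show ?case by simp
next
  case (Cons j js)
  have "prod_list_pmf (map (\<lambda>j. bind_pmf (p j) (k j)) (j # js)) =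
     bind_pmf (p j) (\<lambda>b. bind_pmf (k j b) (\<lambda>b'. map_pmf (Cons b')
        (bind_pmf (prod_list_pmf (map p js)) (\<lambda>z. prod_list_pmf (map2 k js z)))))"
    by (simp only: list.map prod_list_pmf.simps Cons bind_assoc_pmf)
  also have "\<dots> = bind_pmf (p j) (\<lambda>b. bind_pmf (prod_list_pmf (map p js)) (\<lambda>z. bind_pmf (k j b) (\<lambda>b'. map_pmf (Cons b')
        (prod_list_pmf (map2 k js z)))))"
    unfolding map_bind_pmf by (subst bind_commute_pmf) (rule refl)
  also have "\<dots> = bind_pmf (prod_list_pmf (map p (j # js))) (\<lambda>z. prod_list_pmf (map2 k (j # js) z))"
    by (simp only: list.map prod_list_pmf.simps bind_assoc_pmf bind_map_pmf zip_Cons_Cons prod.case)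
  finally show ?case .
qed


lemma map2_map_same: "map2 f xs (map g xs) = map (\<lambda>x. f x (g x)) xs"
  by (induction xs) auto

lemma msnd_bind: "map_pmf snd (bind_pmf M (\<lambda>c. map_pmf (\<lambda>y. (y, c)) (Q c))) = M"
  by (simp add: map_bind_pmf pmf.map_comp o_def bind_return_pmf')

lemma pmf_map_pair_c:
  "pmf (map_pmf (\<lambda>y. (y, c')) Q) (y, c) = (if c' = c then pmf Q y else 0)"
proof (cases "c' = c")
  case True
  have "inj (\<lambda>y. (y, c))" by (auto intro: injI)
  then show ?thesis using True pmf_map_inj'[of "\<lambda>y. (y, c)" Q y] by simp
next
  case False
  then have "(y, c) \<notin> set_pmf (map_pmf (\<lambda>y. (y, c')) Q)" by auto
  then show ?thesis using False by (simp add: pmf_eq_0_set_pmf)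
qed

lemma cond_marg1_bind:
  fixes M :: "'c pmf" and Q :: "'c \<Rightarrow> 'y pmf"
  assumes c: "c \<in> set_pmf M"
  shows "cond_marg1 (bind_pmf M (\<lambda>c. map_pmf (\<lambda>y. (y, c)) (Q c))) c = Q c"
proof -
  define P where "P = bind_pmf M (\<lambda>c. map_pmf (\<lambda>y. (y, c)) (Q c))"
  have ms: "map_pmf snd P = M" unfolding P_def by (rule msnd_bind)
  have ne: "set_pmf P \<inter> {p. snd p = c} \<noteq> {}"
  proof -
    from c ms obtain p where "p \<in> set_pmf P" "snd p = c"
      by (metis (no_types, lifting) imageE set_map_pmf)
    then show ?thesis by auto
  qed
  have meas: "measure_pmf.prob P {p. snd p = c} = pmf M c"
  proof -
    have "measure_pmf.prob P {p. snd p = c} = measure_pmf.prob (map_pmf snd P) {c}"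
      by (simp add: vimage_def)
    then show ?thesis using ms measure_pmf_single by metis
  qed
  have pP: "pmf P (y, c) = pmf M c * pmf (Q c) y" for y
  proof -
    have "pmf P (y, c) = (\<integral>c'. pmf (map_pmf (\<lambda>y. (y, c')) (Q c')) (y, c) \<partial>measure_pmf M)"
      unfolding P_def by (rule pmf_bind)
    also have "\<dots> = (\<integral>c'. (if c' = c then pmf (Q c) y else 0) \<partial>measure_pmf M)"
      by (intro Bochner_Integration.integral_cong refl) (simp add: pmf_map_pair_c)
    also have "\<dots> = (\<Sum>a\<in>{c}. pmf M a *\<^sub>R (if a = c then pmf (Q c) y else 0))"
      by (rule integral_measure_pmf) (auto split: if_splits)
    finally show ?thesis by simp
  qed
  have pos: "pmf M c > 0" using c by (rule pmf_positive)
  have "cond_pmf P {p. snd p = c} = map_pmf (\<lambda>y. (y, c)) (Q c)"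
  proof (rule pmf_eqI)
    fix z :: "'y \<times> 'c"
    obtain y c' where z: "z = (y, c')" by (cases z)
    show "pmf (cond_pmf P {p. snd p = c}) z = pmf (map_pmf (\<lambda>y. (y, c)) (Q c)) z"
      unfolding pmf_cond[OF ne] z
    proof (cases "c' = c")
      case True
      then show "(if (y, c') \<in> {p. snd p = c} then pmf P (y, c') / measure_pmf.prob P {p. snd p = c} else 0) =
        pmf (map_pmf (\<lambda>y. (y, c)) (Q c)) (y, c')"
        using pos by (simp add: meas pP pmf_map_pair_c)
    next
      case False
      then show "(if (y, c') \<in> {p. snd p = c} then pmf P (y, c') / measure_pmf.prob P {p. snd p = c} else 0) =
        pmf (map_pmf (\<lambda>y. (y, c)) (Q c)) (y, c')"
        by (simp add: pmf_map_pair_c)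
    qed
  qed
  then show ?thesis unfolding cond_marg1_def P_def by (simp add: pmf.map_comp o_def)
qed

lemma disintegrate:
  "\<xi> = bind_pmf (map_pmf snd \<xi>) (\<lambda>a. map_pmf (\<lambda>x. (x, a)) (cond_marg1 \<xi> a))"
proof -
  have 1: "bind_pmf (map_pmf snd \<xi>) (\<lambda>a. cond_pmf \<xi> {z. snd z = a}) = \<xi>"
    by (rule bind_cond_pmf_cancel) (auto simp: vimage_def eq_commute)
  have 2: "cond_pmf \<xi> {z. snd z = a} = map_pmf (\<lambda>x. (x, a)) (cond_marg1 \<xi> a)"
    if "a \<in> set_pmf (map_pmf snd \<xi>)" for a
  proof -
    have ne: "set_pmf \<xi> \<inter> {z. snd z = a} \<noteq> {}" using that by auto
    show ?thesis unfolding cond_marg1_def pmf.map_comp o_def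
      by (rule sym, rule map_pmf_idI) (use ne in auto)
  qed
  have "bind_pmf (map_pmf snd \<xi>) (\<lambda>a. cond_pmf \<xi> {z. snd z = a}) =
        bind_pmf (map_pmf snd \<xi>) (\<lambda>a. map_pmf (\<lambda>x. (x, a)) (cond_marg1 \<xi> a))"
    by (rule bind_pmf_cong[OF refl]) (rule 2)
  then show ?thesis using 1 by simp
qed

lemma measure_bind_finite:
  assumes "finite S" "set_pmf p \<subseteq> S"
  shows "measure_pmf.prob (bind_pmf p K) A = (\<Sum>x\<in>S. pmf p x * measure_pmf.prob (K x) A)"
proof -
  have "measure_pmf.prob (bind_pmf p K) A = pmf (map_pmf (\<lambda>y. y \<in> A) (bind_pmf p K)) True"
    by (simp add: pmf_map vimage_def)
  also have "\<dots> = (\<integral>x. pmf (map_pmf (\<lambda>y. y \<in> A) (K x)) True \<partial>measure_pmf p)"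
    by (simp add: map_bind_pmf pmf_bind)
  also have "\<dots> = (\<integral>x. measure_pmf.prob (K x) A \<partial>measure_pmf p)"
    by (simp add: pmf_map vimage_def)
  also have "\<dots> = (\<Sum>x\<in>S. pmf p x *\<^sub>R measure_pmf.prob (K x) A)"
    using assms by (intro integral_measure_pmf) auto
  finally show ?thesis by simp
qed

lemma tv_upper:
  "\<bar>measure_pmf.prob p A - measure_pmf.prob p' A\<bar> \<le> tv_dist p p'"
proof -
  have "bdd_above ((\<lambda>A. \<bar>measure_pmf.prob p A - measure_pmf.prob p' A\<bar>) ` UNIV)"
  proof (rule bdd_aboveI2)
    fix A
    show "\<bar>measure_pmf.prob p A - measure_pmf.prob p' A\<bar> \<le> 1"
      using measure_pmf.prob_le_1[of p A] measure_pmf.prob_le_1[of p' A]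
        measure_nonneg[of p A] measure_nonneg[of p' A] by linarith
  qed
  then show ?thesis unfolding tv_dist_def by (rule cSUP_upper[OF UNIV_I])
qed

lemma tv_bind:
  assumes S: "finite S" "set_pmf p \<subseteq> S" "set_pmf p' \<subseteq> S"
  shows "tv_dist (bind_pmf p K) (bind_pmf p' K) \<le> tv_dist p p'"
  unfolding tv_dist_def[of "bind_pmf p K"]
proof (rule cSUP_least)
  show "UNIV \<noteq> {}" by simp
next
  fix A
  define f where "f x = measure_pmf.prob (K x) A" for x
  define d where "d x = pmf p x - pmf p' x" for x
  have f01: "0 \<le> f x" "f x \<le> 1" for x unfolding f_def by auto
  have diff: "measure_pmf.prob (bind_pmf p K) A - measure_pmf.prob (bind_pmf p' K) A = (\<Sum>x\<in>S. d x * f x)"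
    unfolding measure_bind_finite[OF S(1,2)] measure_bind_finite[OF S(1,3)] d_def f_def
    by (simp add: sum_subtractf left_diff_distrib)
  define T where "T = {x\<in>S. d x > 0}"
  define T' where "T' = {x\<in>S. d x < 0}"
  have fT: "finite T" "finite T'" unfolding T_def T'_def using S by auto
  have sT: "(\<Sum>x\<in>T. d x) = measure_pmf.prob p T - measure_pmf.prob p' T"
    unfolding measure_measure_pmf_finite[OF fT(1)] d_def by (simp add: sum_subtractf)
  have sT': "(\<Sum>x\<in>T'. d x) = measure_pmf.prob p T' - measure_pmf.prob p' T'"
    unfolding measure_measure_pmf_finite[OF fT(2)] d_def by (simp add: sum_subtractf)
  have up: "(\<Sum>x\<in>S. d x * f x) \<le> (\<Sum>x\<in>T. d x)"
  proof -
    have "(\<Sum>x\<in>S. d x * f x) \<le> (\<Sum>x\<in>S. if x \<in> T then d x else 0)"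
    proof (rule sum_mono)
      fix x assume "x \<in> S"
      show "d x * f x \<le> (if x \<in> T then d x else 0)"
      proof (cases "d x > 0")
        case True
        then have "d x * f x \<le> d x * 1" using f01[of x] by (intro mult_left_mono) auto
        then show ?thesis using True \<open>x \<in> S\<close> unfolding T_def by simp
      next
        case False
        then have "d x * f x \<le> 0" using f01[of x] by (simp add: mult_nonpos_nonneg)
        then show ?thesis using False unfolding T_def by simp
      qed
    qed
    also have "\<dots> = (\<Sum>x\<in>T. d x)"
      using S(1) unfolding T_def by (simp add: sum.inter_filter)
    finally show ?thesis .
  qed
  have lo: "(\<Sum>x\<in>T'. d x) \<le> (\<Sum>x\<in>S. d x * f x)"
  proof -
    have "(\<Sum>x\<in>T'. d x) = (\<Sum>x\<in>S. if x \<in> T' then d x else 0)"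
      using S(1) unfolding T'_def by (simp add: sum.inter_filter)
    also have "\<dots> \<le> (\<Sum>x\<in>S. d x * f x)"
    proof (rule sum_mono)
      fix x assume "x \<in> S"
      show "(if x \<in> T' then d x else 0) \<le> d x * f x"
      proof (cases "d x < 0")
        case True
        then have "d x * 1 \<le> d x * f x" using f01[of x] by (intro mult_left_mono_neg) auto
        then show ?thesis using True \<open>x \<in> S\<close> unfolding T'_def by simp
      next
        case False
        then have "0 \<le> d x * f x" using f01[of x] by simp
        then show ?thesis using False unfolding T'_def by simp
      qed
    qed
    finally show ?thesis .
  qed
  have "\<bar>measure_pmf.prob p T - measure_pmf.prob p' T\<bar> \<le> tv_dist p p'" by (rule tv_upper)
  moreover have "\<bar>measure_pmf.prob p T' - measure_pmf.prob p' T'\<bar> \<le> tv_dist p p'" by (rule tv_upper)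
  ultimately show "\<bar>measure_pmf.prob (bind_pmf p K) A - measure_pmf.prob (bind_pmf p' K) A\<bar> \<le> tv_dist p p'"
    using up lo sT sT' diff by linarith
qed


lemma finite_len_lists: "finite {z :: bool list. length z = m}"
proof -
  have "finite {z :: bool list. set z \<subseteq> UNIV \<and> length z = m}"
    by (rule finite_lists_length_eq) simp
  then show ?thesis by simp
qed

lemma eps_indep_channel:
  fixes \<nu> :: "bool list pmf" and G :: "nat \<Rightarrow> bool \<Rightarrow> bool pmf"
  assumes js: "distinct js" "set js \<subseteq> {..<n}" and ind: "eps_independent \<epsilon> \<nu> js"
  shows "eps_independent \<epsilon> (bind_pmf \<nu> (\<lambda>x. prod_list_pmf (map (\<lambda>i. G i (x ! i)) [0..<n]))) js"
proof -
  define K where "K x = prod_list_pmf (map (\<lambda>i. G i (x ! i)) [0..<n])" for x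
  have lt: "\<forall>j\<in>set js. j < length (map (\<lambda>i. G i (x ! i)) [0..<n])" for x using js by auto
  have tm: "tuple_marg (bind_pmf \<nu> K) js = bind_pmf (tuple_marg \<nu> js) (\<lambda>z. prod_list_pmf (map2 G js z))"
  proof -
    have "tuple_marg (bind_pmf \<nu> K) js = bind_pmf \<nu> (\<lambda>x. map_pmf (\<lambda>y. map (\<lambda>j. y ! j) js) (K x))"
      unfolding tuple_marg_def by (simp add: map_bind_pmf)
    also have "\<dots> = bind_pmf \<nu> (\<lambda>x. prod_list_pmf (map (\<lambda>j. G j (x ! j)) js))"
    proof (rule bind_pmf_cong[OF refl])
      fix x
      have eq: "map (\<lambda>j. map (\<lambda>i. G i (x ! i)) [0..<n] ! j) js = map (\<lambda>j. G j (x ! j)) js"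
        using js by (intro map_cong refl) auto
      show "map_pmf (\<lambda>y. map (\<lambda>j. y ! j) js) (K x) = prod_list_pmf (map (\<lambda>j. G j (x ! j)) js)"
        by (simp only: K_def prod_list_sel[OF js(1) lt] eq)
    qed
    also have "\<dots> = bind_pmf (tuple_marg \<nu> js) (\<lambda>z. prod_list_pmf (map2 G js z))"
      unfolding tuple_marg_def bind_map_pmf map2_map_same by simp
    finally show ?thesis .
  qed
  have cm: "coord_marg (bind_pmf \<nu> K) j = bind_pmf (coord_marg \<nu> j) (G j)" if "j \<in> set js" for j
  proof -
    have jn: "j < n" using that js by auto
    have "coord_marg (bind_pmf \<nu> K) j = bind_pmf \<nu> (\<lambda>x. map_pmf (\<lambda>y. y ! j) (K x))"
      unfolding coord_marg_def by (simp add: map_bind_pmf)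
    also have "\<dots> = bind_pmf \<nu> (\<lambda>x. G j (x ! j))"
      unfolding K_def using jn by (subst prod_list_coord) auto
    also have "\<dots> = bind_pmf (coord_marg \<nu> j) (G j)"
      unfolding coord_marg_def bind_map_pmf by simp
    finally show ?thesis .
  qed
  have pm: "prod_list_pmf (map (coord_marg (bind_pmf \<nu> K)) js) =
     bind_pmf (prod_list_pmf (map (coord_marg \<nu>) js)) (\<lambda>z. prod_list_pmf (map2 G js z))"
  proof -
    have eq: "map (coord_marg (bind_pmf \<nu> K)) js = map (\<lambda>j. bind_pmf (coord_marg \<nu> j) (G j)) js"
      using cm by (intro map_cong refl) auto
    show ?thesis unfolding eq by (rule prod_list_bind)
  qed
  define S where "S = {z :: bool list. length z = length js}"
  have fS: "finite S" unfolding S_def by (rule finite_len_lists)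
  have s1: "set_pmf (tuple_marg \<nu> js) \<subseteq> S" unfolding S_def tuple_marg_def by auto
  have s2: "set_pmf (prod_list_pmf (map (coord_marg \<nu>) js)) \<subseteq> S"
    unfolding S_def using set_prod_list_pmf[of "map (coord_marg \<nu>) js"] by simp
  have "tv_dist (tuple_marg (bind_pmf \<nu> K) js) (prod_list_pmf (map (coord_marg (bind_pmf \<nu> K)) js))
      \<le> tv_dist (tuple_marg \<nu> js) (prod_list_pmf (map (coord_marg \<nu>) js))"
    unfolding tm pm by (rule tv_bind[OF fS s1 s2])
  then show ?thesis using ind unfolding eps_independent_def K_def[symmetric] by linarith
qed

lemma good_dist_mono:
  assumes "good_dist n \<epsilon> q \<nu>"
    and "\<And>js. js \<in> distinct_tuples n q \<Longrightarrow> eps_independent \<epsilon> \<nu> js \<Longrightarrow> eps_independent \<epsilon> \<nu>' js"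
  shows "good_dist n \<epsilon> q \<nu>'"
proof -
  have fin: "finite (distinct_tuples n q)"
  proof -
    have "finite {xs. set xs \<subseteq> {..<n} \<and> length xs = q}" by (rule finite_lists_length_eq) simp
    then show ?thesis unfolding distinct_tuples_def by (rule finite_subset[rotated]) auto
  qed
  have "card {js \<in> distinct_tuples n q. eps_independent \<epsilon> \<nu> js}
        \<le> card {js \<in> distinct_tuples n q. eps_independent \<epsilon> \<nu>' js}"
    by (rule card_mono) (use fin assms(2) in auto)
  then show ?thesis using assms(1) unfolding good_dist_def by linarith
qed


theorem lemma5p9:
  fixes n q :: nat and \<epsilon> :: real
    and \<mu> :: "bool list pmf"
    and \<xi> :: "(bool list \<times> 'a::finite) pmf"
    and \<eta> :: "('a \<times> 'b::finite) pmf"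
    and H :: "nat \<Rightarrow> ('a \<times> 'b \<Rightarrow> real) \<times> ('a \<times> 'b \<Rightarrow> real)"
  assumes "0 < \<epsilon>" "\<epsilon> < 1"
    and "is_detailing n \<mu> \<xi>"
    and "map_pmf fst \<eta> = map_pmf snd \<xi>"
    and "\<forall>i<n. \<forall>ab. fst (H i) ab \<in> {0..1} \<and> snd (H i) ab \<in> {0..1}"
    and "\<forall>i<n. \<forall>a b. pmf \<eta> (a, b) > 0 \<longrightarrow>
           fst (H i) (a, b) = measure_pmf.prob (cond_marg1 \<xi> a) {x. x ! i}"
    and "good_detailing n \<epsilon> q \<xi>"
  shows "good_detailing n \<epsilon> q
           (map_pmf (\<lambda>(x, y, ab). (y, ab)) (change_types n \<xi> \<eta> H))"
proof -
  define Ma where "Ma = map_pmf snd \<xi>"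
  define M' where "M' = bind_pmf Ma (\<lambda>a. map_pmf (Pair a) (cond_marg2 \<eta> a))"
  define G where "G c i b = bernoulli_pmf (one_prob b (fst (H i) c) (snd (H i) c))" for c i b
  define K where "K c x = prod_list_pmf (map (\<lambda>i. G c i (x ! i)) [0..<n])" for c x
  define R where "R c = bind_pmf (cond_marg1 \<xi> (fst c)) (K c)" for c
  define Out where "Out = map_pmf (\<lambda>(x, y, ab). (y, ab)) (change_types n \<xi> \<eta> H)"
  define F where "F a x = bind_pmf (cond_marg2 \<eta> a) (\<lambda>b. map_pmf (\<lambda>y. (y, (a, b))) (K (a, b) x))" for a x
  have D: "\<xi> = bind_pmf Ma (\<lambda>a. map_pmf (\<lambda>x. (x, a)) (cond_marg1 \<xi> a))"
    unfolding Ma_def by (rule disintegrate)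
  have "Out = bind_pmf \<xi> (\<lambda>(x, a). F a x)"
    unfolding Out_def change_types_def map_bind_pmf
    by (intro bind_pmf_cong refl) (auto simp: F_def map_bind_pmf pmf.map_comp o_def K_def G_def split: prod.splits)
  also have "\<dots> = bind_pmf (bind_pmf Ma (\<lambda>a. map_pmf (\<lambda>x. (x, a)) (cond_marg1 \<xi> a))) (\<lambda>(x, a). F a x)"
    using D by (rule arg_cong)
  also have "\<dots> = bind_pmf Ma (\<lambda>a. bind_pmf (cond_marg1 \<xi> a) (\<lambda>x. F a x))"
    by (simp add: bind_assoc_pmf bind_map_pmf)
  also have "\<dots> = bind_pmf Ma (\<lambda>a. bind_pmf (cond_marg2 \<eta> a) (\<lambda>b. bind_pmf (cond_marg1 \<xi> a)
       (\<lambda>x. map_pmf (\<lambda>y. (y, (a, b))) (K (a, b) x))))"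
    unfolding F_def by (rule bind_pmf_cong[OF refl]) (rule bind_commute_pmf)
  also have "\<dots> = bind_pmf M' (\<lambda>c. map_pmf (\<lambda>y. (y, c)) (R c))"
    unfolding M'_def R_def by (simp add: bind_assoc_pmf bind_map_pmf map_bind_pmf)
  finally have out: "Out = bind_pmf M' (\<lambda>c. map_pmf (\<lambda>y. (y, c)) (R c))" .
  from assms(7) obtain J where J: "J \<subseteq> set_pmf Ma" "measure_pmf.prob Ma J \<ge> 1 - \<epsilon>"
    "\<forall>c\<in>J. good_dist n \<epsilon> q (cond_marg1 \<xi> c)"
    unfolding good_detailing_def Ma_def by blast
  define J' where "J' = {c \<in> set_pmf M'. fst c \<in> J}"
  have ms: "map_pmf snd Out = M'" unfolding out by (rule msnd_bind)
  have mf: "map_pmf fst M' = Ma"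
    unfolding M'_def by (simp add: map_bind_pmf pmf.map_comp o_def bind_return_pmf')
  have pJ: "measure_pmf.prob M' J' = measure_pmf.prob Ma J"
  proof -
    have "J' = fst -` J \<inter> set_pmf M'" unfolding J'_def by auto
    then have "measure_pmf.prob M' J' = measure_pmf.prob M' (fst -` J)"
      by (simp add: measure_Int_set_pmf)
    also have "\<dots> = measure_pmf.prob (map_pmf fst M') J" by simp
    finally show ?thesis unfolding mf .
  qed
  have gd: "good_dist n \<epsilon> q (cond_marg1 Out c)" if c: "c \<in> J'" for c
  proof -
    have cM: "c \<in> set_pmf M'" and cJ: "fst c \<in> J" using c unfolding J'_def by auto
    have "cond_marg1 Out c = R c" unfolding out by (rule cond_marg1_bind[OF cM])
    moreover have "good_dist n \<epsilon> q (R c)"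
    proof (rule good_dist_mono)
      show "good_dist n \<epsilon> q (cond_marg1 \<xi> (fst c))" using J(3) cJ by blast
    next
      fix js assume "js \<in> distinct_tuples n q" "eps_independent \<epsilon> (cond_marg1 \<xi> (fst c)) js"
      then show "eps_independent \<epsilon> (R c) js"
        unfolding R_def K_def distinct_tuples_def
        by (intro eps_indep_channel) auto
    qed
    ultimately show ?thesis by simp
  qed
  show ?thesis
    unfolding Out_def[symmetric] good_detailing_def ms
  proof (intro exI[of _ J'] conjI ballI)
    show "J' \<subseteq> set_pmf M'" unfolding J'_def by auto
    show "1 - \<epsilon> \<le> measure_pmf.prob M' J'" using pJ J(2) by simp
  qed (rule gd)
qed

end
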